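(* Let $q$ be a query with sensitivity $\Delta q>0$, let $0\le a<c$, and let the random scale $b$ be such that $1/b$ is uniformly distributed on $[a,c]$. Then the R$^2$DP Laplace mechanism $\mathcal M_q(d,b)=q(d)+\mathrm{Lap}(b)$ is $$\ln\left[\frac{\alpha^2-\beta^2}{2\big((1+\beta)e^{-\beta}-(1+\alpha)e^{-\alpha}\big)}\right]\text{-differentially private},$$ where $\alpha=a\,\Delta q$ and $\beta=c\,\Delta q$.
   Context: $\mathrm{Lap}(b)$ is the zero-mean Laplace distribution with density $\frac{1}{2b}e^{-|x|/b}$; the R$^2$DP Laplace mechanism draws the random scale $b$ (independently of the data) and then adds $\mathrm{Lap}(b)$ noise to $q(d)$. $\Delta q=\max|q(d)-q(d')|$ over datasets $d,d'$ differing in one individual's data. A mechanism is $\epsilon$-differentially private if $\mathbb P(\mathcal M(d)\in S)\le e^\epsilon\mathbb P(\mathcal M(d')\in S)$ for all such $d,d'$ and measurable $S$. *)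

theory Defs
  imports "HOL-Probability.Probability"
begin

definition lap_density :: "real \<Rightarrow> real \<Rightarrow> real" where
  "lap_density b x = exp (- \<bar>x\<bar> / b) / (2 * b)"

definition laplace_shifted :: "real \<Rightarrow> real \<Rightarrow> real measure" where
  "laplace_shifted v b = density lborel (\<lambda>y. ennreal (lap_density b (y - v)))"

definition R2DP_laplace :: "real measure \<Rightarrow> ('d \<Rightarrow> real) \<Rightarrow> 'd \<Rightarrow> real measure" where
  "R2DP_laplace B q d = B \<bind> (\<lambda>b. laplace_shifted (q d) b)"

definition sensitivity :: "('d \<Rightarrow> 'd \<Rightarrow> bool) \<Rightarrow> ('d \<Rightarrow> real) \<Rightarrow> real" where
  "sensitivity adj q = (SUP p\<in>{(d, d'). adj d d'}. \<bar>q (fst p) - q (snd p)\<bar>)"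

definition differentially_private ::
  "('d \<Rightarrow> 'd \<Rightarrow> bool) \<Rightarrow> ('d \<Rightarrow> real measure) \<Rightarrow> real \<Rightarrow> bool" where
  "differentially_private adj M \<epsilon> \<longleftrightarrow>
     (\<forall>d d'. adj d d' \<longrightarrow>
        (\<forall>S \<in> sets borel. measure (M d) S \<le> exp \<epsilon> * measure (M d') S))"

end

theory Submission
  imports Defs
begin


lemma ennreal_2le: "2 * X \<le> 2 \<Longrightarrow> X \<le> (1::ennreal)"
  using ennreal_mult_le_mult_iff[of 2 X 1] by simp

lemma lap_measurable[measurable]:
  assumes [measurable]: "f \<in> borel_measurable M" "g \<in> borel_measurable M"
  shows "(\<lambda>x. lap_density (f x) (g x)) \<in> borel_measurable M"
  unfolding lap_density_def by measurable

lemma lap_total: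
  assumes b: "b > 0"
  shows "(\<integral>\<^sup>+y. ennreal (lap_density b (y - v)) \<partial>lborel) \<le> 1"
proof -
  let ?e = "erlang_density 0 (1/b)"
  have shift: "(\<integral>\<^sup>+y. ennreal (lap_density b (y - v)) \<partial>lborel) = (\<integral>\<^sup>+y. ennreal (lap_density b y) \<partial>lborel)"
    by (subst nn_integral_real_affine[where c=1 and t=v]) (auto simp: lap_density_def)
  have e1: "(\<integral>\<^sup>+y. ennreal (?e y) \<partial>lborel) = 1"
    using nn_integral_erlang_ith_moment[of "1/b" 0 0] b by simp
  have e2: "(\<integral>\<^sup>+y. ennreal (?e (-y)) \<partial>lborel) = 1"
    using nn_integral_real_affine[where c="-1" and t=0 and f="\<lambda>y. ennreal (?e y)"] e1 by simp
  have pw: "2 * ennreal (lap_density b y) \<le> ennreal (?e y) + ennreal (?e (-y))" for y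
  proof -
    have "2 * lap_density b y \<le> ?e y + ?e (-y)"
      using b by (auto simp: lap_density_def erlang_density_def field_simps)
    then have "ennreal (2 * lap_density b y) \<le> ennreal (?e y + ?e (-y))"
      by (rule ennreal_leI)
    moreover have "0 \<le> lap_density b y" using b by (simp add: lap_density_def)
    moreover have "0 \<le> ?e y" "0 \<le> ?e (-y)" using b by auto
    ultimately show ?thesis by (simp add: ennreal_mult ennreal_plus[symmetric] del: ennreal_plus)
  qed
  have "2 * (\<integral>\<^sup>+y. ennreal (lap_density b y) \<partial>lborel) = (\<integral>\<^sup>+y. 2 * ennreal (lap_density b y) \<partial>lborel)"
    by (rule nn_integral_cmult[symmetric]) (auto simp: lap_density_def)
  also have "\<dots> \<le> (\<integral>\<^sup>+y. ennreal (?e y) + ennreal (?e (-y)) \<partial>lborel)"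
    by (intro nn_integral_mono pw)
  also have "\<dots> = 2"
    by (subst nn_integral_add) (auto simp: e1 e2)
  finally show ?thesis using shift ennreal_2le by simp
qed



definition Hf :: "real \<Rightarrow> real \<Rightarrow> real \<Rightarrow> ennreal" where
  "Hf a c t = (\<integral>\<^sup>+u. ennreal (indicator {a..c} u * u * exp (-(u * t))) \<partial>lborel)"

lemma Hprod:
  assumes a: "0 \<le> a"
  shows "Hf a c t * Hf a c s = (\<integral>\<^sup>+u. (\<integral>\<^sup>+v. ennreal ((indicator {a..c} u * u) * (indicator {a..c} v * v)
      * exp (-(u * t)) * exp (-(v * s))) \<partial>lborel) \<partial>lborel)"
proof -
  have "Hf a c t * Hf a c s = (\<integral>\<^sup>+u. ennreal (indicator {a..c} u * u * exp (-(u * t))) * Hf a c s \<partial>lborel)"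
    unfolding Hf_def by (rule nn_integral_multc[symmetric]) auto
  also have "\<dots> = (\<integral>\<^sup>+u. (\<integral>\<^sup>+v. ennreal (indicator {a..c} u * u * exp (-(u * t))) * 
        ennreal (indicator {a..c} v * v * exp (-(v * s))) \<partial>lborel) \<partial>lborel)"
    unfolding Hf_def by (intro nn_integral_cong nn_integral_cmult[symmetric]) auto
  also have "\<dots> = (\<integral>\<^sup>+u. (\<integral>\<^sup>+v. ennreal ((indicator {a..c} u * u) * (indicator {a..c} v * v)
      * exp (-(u * t)) * exp (-(v * s))) \<partial>lborel) \<partial>lborel)"
  proof (intro nn_integral_cong)
    fix u v :: real
    have "0 \<le> indicator {a..c} u * u" "0 \<le> indicator {a..c} v * v"
      using a by (auto split: split_indicator)
    then have "ennreal (indicator {a..c} u * u * exp (-(u * t))) * ennreal (indicator {a..c} v * v * exp (-(v * s)))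
      = ennreal ((indicator {a..c} u * u * exp (-(u * t))) * (indicator {a..c} v * v * exp (-(v * s))))"
      by (simp add: ennreal_mult)
    then show "ennreal (indicator {a..c} u * u * exp (-(u * t))) * ennreal (indicator {a..c} v * v * exp (-(v * s)))
      = ennreal ((indicator {a..c} u * u) * (indicator {a..c} v * v) * exp (-(u * t)) * exp (-(v * s)))"
      by (simp add: mult_ac)
  qed
  finally show ?thesis .
qed

lemma swap2:
  fixes F :: "real \<Rightarrow> real \<Rightarrow> real"
  assumes Fm: "(\<lambda>p. F (fst p) (snd p)) \<in> borel_measurable (lborel \<Otimes>\<^sub>M lborel)"
  shows "(\<integral>\<^sup>+u. (\<integral>\<^sup>+v. ennreal (F u v) \<partial>lborel) \<partial>lborel) = (\<integral>\<^sup>+u. (\<integral>\<^sup>+v. ennreal (F v u) \<partial>lborel) \<partial>lborel)"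
proof -
  have "(\<lambda>(x,y). F y x) \<in> borel_measurable (lborel \<Otimes>\<^sub>M lborel)"
    using measurable_pair_swap_iff[THEN iffD1, OF Fm] by (simp add: case_prod_unfold)
  then have m: "case_prod (\<lambda>v u. ennreal (F u v)) \<in> borel_measurable (lborel \<Otimes>\<^sub>M lborel)"
    using measurable_compose[OF _ measurable_ennreal] by (simp add: case_prod_unfold)
  show ?thesis using lborel_pair.Fubini'[OF m] by simp
qed

lemma exp_ineq:
  fixes u v t D :: real
  assumes "0 \<le> t" "0 \<le> D"
  shows "exp (-(u * t)) * exp (-(v * D)) + exp (-(v * t)) * exp (-(u * D)) \<le> exp (-(u * (t+D))) + exp (-(v * (t+D)))"
proof -
  have "0 \<le> (exp (-(u * t)) - exp (-(v * t))) * (exp (-(u * D)) - exp (-(v * D)))"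
  proof (cases "u \<le> v")
    case True
    then have "exp (-(v * t)) \<le> exp (-(u * t))" "exp (-(v * D)) \<le> exp (-(u * D))"
      using assms by (auto intro: mult_right_mono)
    then show ?thesis by simp
  next
    case False
    then have "exp (-(u * t)) \<le> exp (-(v * t))" "exp (-(u * D)) \<le> exp (-(v * D))"
      using assms by (auto intro: mult_right_mono)
    then show ?thesis by (simp add: mult_nonpos_nonpos)
  qed
  moreover have "exp (-(u * (t+D))) = exp (-(u * t)) * exp (-(u * D))" "exp (-(v * (t+D))) = exp (-(v * t)) * exp (-(v * D))"
    by (simp_all add: distrib_left exp_add[symmetric])
  ultimately show ?thesis by (simp add: algebra_simps)
qed

lemma H_key:
  assumes a: "0 \<le> a" and t: "0 \<le> t" and D: "0 \<le> D"
  shows "Hf a c t * Hf a c D \<le> Hf a c 0 * Hf a c (t + D)"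
proof -
  define w where "w u = indicator {a..c} u * (u::real)" for u
  have w0: "0 \<le> w u" for u using a by (auto simp: w_def split: split_indicator)
  have wm[measurable]: "w \<in> borel_measurable borel" unfolding w_def by measurable
  have P: "Hf a c t' * Hf a c s = (\<integral>\<^sup>+u. (\<integral>\<^sup>+v. ennreal (w u * w v * exp (-(u * t')) * exp (-(v * s))) \<partial>lborel) \<partial>lborel)" for t' s
    using Hprod[OF a] unfolding w_def .
  have P': "Hf a c t' * Hf a c s = (\<integral>\<^sup>+u. (\<integral>\<^sup>+v. ennreal (w u * w v * exp (-(v * t')) * exp (-(u * s))) \<partial>lborel) \<partial>lborel)" for t' s
    unfolding P by (subst swap2) (auto simp: mult_ac)
  have "2 * (Hf a c t * Hf a c D) = Hf a c t * Hf a c D + Hf a c t * Hf a c D"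
    by (simp add: mult_2)
  also have "\<dots> = (\<integral>\<^sup>+u. (\<integral>\<^sup>+v. ennreal (w u * w v * exp (-(u * t)) * exp (-(v * D))) + ennreal (w u * w v * exp (-(v * t)) * exp (-(u * D))) \<partial>lborel) \<partial>lborel)"
    apply (subst P, subst P')
    apply (subst nn_integral_add[symmetric], simp, simp)
    apply (intro nn_integral_cong)
    apply (subst nn_integral_add[symmetric], simp, simp)
    apply simp
    done
  also have "\<dots> \<le> (\<integral>\<^sup>+u. (\<integral>\<^sup>+v. ennreal (w u * w v * exp (-(u * 0)) * exp (-(v * (t+D)))) + ennreal (w u * w v * exp (-(v * 0)) * exp (-(u * (t+D)))) \<partial>lborel) \<partial>lborel)"
  proof (intro nn_integral_mono)
    fix u v
    have "w u * w v * (exp (-(u * t)) * exp (-(v * D)) + exp (-(v * t)) * exp (-(u * D))) \<le> w u * w v * (exp (-(u * (t+D))) + exp (-(v * (t+D))))"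
      using exp_ineq[OF t D, of u v] w0 by (intro mult_left_mono) auto
    then have "ennreal (w u * w v * exp (-(u * t)) * exp (-(v * D)) + w u * w v * exp (-(v * t)) * exp (-(u * D))) \<le>
       ennreal (w u * w v * exp (-(u * 0)) * exp (-(v * (t+D))) + w u * w v * exp (-(v * 0)) * exp (-(u * (t+D))))"
      by (intro ennreal_leI) (simp add: algebra_simps)
    then show "ennreal (w u * w v * exp (-(u * t)) * exp (-(v * D))) + ennreal (w u * w v * exp (-(v * t)) * exp (-(u * D)))
       \<le> ennreal (w u * w v * exp (-(u * 0)) * exp (-(v * (t+D)))) + ennreal (w u * w v * exp (-(v * 0)) * exp (-(u * (t+D))))"
      using w0[of u] w0[of v] by (simp add: ennreal_plus[symmetric] del: ennreal_plus)
  qed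
  also have "\<dots> = Hf a c 0 * Hf a c (t+D) + Hf a c 0 * Hf a c (t+D)"
    apply (subst (2) P, subst P')
    apply (subst nn_integral_add[symmetric], simp, simp)
    apply (intro nn_integral_cong)
    apply (subst nn_integral_add[symmetric], simp, simp)
    apply (simp add: add.commute)
    done
  also have "\<dots> = 2 * (Hf a c 0 * Hf a c (t+D))"
    by (simp add: mult_2)
  finally show ?thesis
    using ennreal_mult_le_mult_iff[of 2] by simp
qed



lemma H0:
  assumes "0 \<le> a" "a \<le> c"
  shows "Hf a c 0 = ennreal ((c\<^sup>2 - a\<^sup>2) / 2)"
proof -
  have "Hf a c 0 = (\<integral>\<^sup>+u. ennreal u * indicator {a..c} u \<partial>lborel)"
    unfolding Hf_def by (intro nn_integral_cong) (auto split: split_indicator)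
  also have "\<dots> = ennreal (c\<^sup>2 / 2 - a\<^sup>2 / 2)"
    using assms by (intro nn_integral_FTC_Icc[where F="\<lambda>u. u\<^sup>2 / 2"]) (auto intro!: derivative_eq_intros)
  finally show ?thesis by (simp add: diff_divide_distrib)
qed

lemma HD:
  assumes "0 \<le> a" "a \<le> c" "0 < D"
  shows "Hf a c D = ennreal (((1 + a * D) * exp (-(a * D)) - (1 + c * D) * exp (-(c * D))) / D\<^sup>2)"
proof -
  have "Hf a c D = (\<integral>\<^sup>+u. ennreal (u * exp (-(u * D))) * indicator {a..c} u \<partial>lborel)"
    unfolding Hf_def by (intro nn_integral_cong) (auto split: split_indicator)
  also have "\<dots> = ennreal ((- ((1 + c * D) * exp (-(c * D))) / D\<^sup>2) - (- ((1 + a * D) * exp (-(a * D))) / D\<^sup>2))"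
  proof (rule nn_integral_FTC_Icc[where F="\<lambda>u. - ((1 + u * D) * exp (-(u * D))) / D\<^sup>2"])
    fix x assume "x \<in> {a..c}"
    show "((\<lambda>u. - ((1 + u * D) * exp (-(u * D))) / D\<^sup>2) has_real_derivative x * exp (-(x * D))) (at x)"
      using assms by (auto intro!: derivative_eq_intros simp: field_simps power2_eq_square)
  next
    fix x :: real assume "x \<in> {a..c}" then show "0 \<le> x * exp (-(x * D))" using assms by auto
  qed (auto simp: assms)
  finally show ?thesis by (simp add: diff_divide_distrib)
qed

lemma Hmono:
  assumes "0 \<le> a" "t \<le> s"
  shows "Hf a c s \<le> Hf a c t"
  unfolding Hf_def
proof (intro nn_integral_mono ennreal_leI)
  fix u :: real
  show "indicator {a..c} u * u * exp (-(u * s)) \<le> indicator {a..c} u * u * exp (-(u * t))"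
    using assms by (auto split: split_indicator intro!: mult_left_mono mult_right_mono)
qed

lemma decr: "0 \<le> x \<Longrightarrow> x < y \<Longrightarrow> (1 + y) * exp (- y) < (1 + x) * exp (- (x::real))"
  apply (rule DERIV_neg_imp_decreasing_open[where f="\<lambda>x. (1 + x) * exp (- x)"])
    apply simp
   apply (rule exI[where x="- _ * exp (- _)"])
   apply (auto intro!: derivative_eq_intros continuous_intros simp: algebra_simps)
  done



lemma ratio:
  assumes a: "0 \<le> a" and ac: "a < c" and D: "0 < D" and t: "0 \<le> t" and s: "0 \<le> s" and st: "s \<le> t + D"
  shows "Hf a c t \<le> ennreal (((c\<^sup>2 - a\<^sup>2) / 2) / (((1 + a * D) * exp (-(a * D)) - (1 + c * D) * exp (-(c * D))) / D\<^sup>2)) * Hf a c s"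
proof -
  define Fd where "Fd = ((1 + a * D) * exp (-(a * D)) - (1 + c * D) * exp (-(c * D))) / D\<^sup>2"
  define H0 where "H0 = (c\<^sup>2 - a\<^sup>2) / 2"
  have "(1 + c * D) * exp (-(c * D)) < (1 + a * D) * exp (-(a * D))"
    using decr[of "a * D" "c * D"] a ac D by (simp add: mult_strict_right_mono)
  then have Fd: "0 < Fd" unfolding Fd_def using D by simp
  have H0p: "0 \<le> H0" unfolding H0_def using a ac by (simp add: power_mono)
  define h where "h x = enn2real (Hf a c x)" for x
  have fin: "Hf a c x = ennreal (h x)" if "0 \<le> x" for x
  proof -
    have "Hf a c x \<le> Hf a c 0" using Hmono[OF a that] .
    also have "\<dots> = ennreal H0" using H0[OF a] ac unfolding H0_def by simp
    finally have "Hf a c x < top" using ennreal_less_top[of H0] by (rule le_less_trans)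
    then show ?thesis unfolding h_def by simp
  qed
  have hnn: "0 \<le> h x" for x unfolding h_def by simp
  have "ennreal (h t) * ennreal Fd \<le> ennreal H0 * ennreal (h (t + D))"
  proof -
    have e1: "Hf a c D = ennreal Fd" unfolding Fd_def using HD[OF a less_imp_le[OF ac] D] .
    have e0: "Hf a c 0 = ennreal H0" unfolding H0_def using H0[OF a less_imp_le[OF ac]] .
    show ?thesis using H_key[OF a t less_imp_le[OF D], of c]
      unfolding e1 e0 fin[OF t] fin[OF add_nonneg_nonneg[OF t less_imp_le[OF D]]] .
  qed
  then have "ennreal (h t * Fd) \<le> ennreal (H0 * h (t + D))"
    using hnn Fd H0p by (simp add: ennreal_mult)
  then have "h t * Fd \<le> H0 * h (t + D)"
    using hnn H0p by (simp add: ennreal_le_iff)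
  then have 1: "h t \<le> H0 / Fd * h (t + D)"
    using Fd by (simp add: field_simps)
  have "h (t + D) \<le> h s"
    using Hmono[OF a st, of c] fin[OF s] fin[of "t + D"] t D hnn by simp
  then have "h t \<le> H0 / Fd * h s"
    using 1 H0p Fd by (meson order_trans mult_left_mono divide_nonneg_pos less_imp_le)
  then have "ennreal (h t) \<le> ennreal (H0 / Fd * h s)" by (rule ennreal_leI)
  also have "\<dots> = ennreal (H0 / Fd) * Hf a c s"
    using fin[OF s] H0p Fd hnn[of s] by (simp add: ennreal_mult[symmetric] del: times_divide_eq_left)
  finally show ?thesis
    using fin[OF t] unfolding Fd_def[symmetric] H0_def[symmetric] by simp
qed



lemma kernel_meas:
  assumes B_sets: "sets B = sets borel"
  shows "laplace_shifted v \<in> measurable B (subprob_algebra borel)"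
proof (rule measurable_subprob_algebra)
  fix b assume "b \<in> space B"
  show "subprob_space (laplace_shifted v b)"
  proof (rule subprob_spaceI)
    have "emeasure (laplace_shifted v b) (space (laplace_shifted v b)) = (\<integral>\<^sup>+y. ennreal (lap_density b (y - v)) \<partial>lborel)"
      unfolding laplace_shifted_def by (subst emeasure_density) auto
    also have "\<dots> \<le> 1"
    proof (cases "b > 0")
      case True then show ?thesis by (rule lap_total)
    next
      case False
      then have "lap_density b y \<le> 0" for y
        by (cases "b = 0") (auto simp: lap_density_def divide_nonneg_neg)
      then have "(\<integral>\<^sup>+y. ennreal (lap_density b (y - v)) \<partial>lborel) = 0"
        by (subst nn_integral_cong[where v="\<lambda>_. 0"]) (simp_all add: ennreal_eq_0_iff)
      then show ?thesis by simp
    qed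
    finally show "emeasure (laplace_shifted v b) (space (laplace_shifted v b)) \<le> 1" .
  qed (simp add: laplace_shifted_def)
next
  fix b show "sets (laplace_shifted v b) = sets borel" by (simp add: laplace_shifted_def)
next
  fix A :: "real set" assume [measurable]: "A \<in> sets borel"
  note B_sets[measurable_cong]
  have "(\<lambda>b. emeasure (laplace_shifted v b) A) = (\<lambda>b. \<integral>\<^sup>+y. ennreal (lap_density b (y - v)) * indicator A y \<partial>lborel)"
    unfolding laplace_shifted_def by (intro ext emeasure_density) auto
  also have "\<dots> \<in> borel_measurable B" by measurable
  finally show "(\<lambda>b. emeasure (laplace_shifted v b) A) \<in> borel_measurable B" .
qed

lemma bind_formula:
  assumes B_prob: "prob_space B" and B_sets: "sets B = sets borel" and S[measurable]: "S \<in> sets borel"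
  shows "emeasure (R2DP_laplace B q d) S = (\<integral>\<^sup>+x. (\<integral>\<^sup>+b. ennreal (lap_density b (x - q d)) \<partial>B) * indicator S x \<partial>lborel)"
proof -
  note B_sets[measurable_cong]
  interpret B: prob_space B by (rule B_prob)
  interpret P: pair_sigma_finite B lborel
    by (intro pair_sigma_finite.intro B.sigma_finite_measure_axioms lborel.sigma_finite_measure_axioms)
  have "emeasure (R2DP_laplace B q d) S = (\<integral>\<^sup>+b. emeasure (laplace_shifted (q d) b) S \<partial>B)"
    unfolding R2DP_laplace_def
    by (rule emeasure_bind[OF B.not_empty kernel_meas[OF B_sets] S])
  also have "\<dots> = (\<integral>\<^sup>+b. (\<integral>\<^sup>+x. ennreal (lap_density b (x - q d)) * indicator S x \<partial>lborel) \<partial>B)"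
    unfolding laplace_shifted_def by (intro nn_integral_cong emeasure_density) auto
  also have "\<dots> = (\<integral>\<^sup>+x. (\<integral>\<^sup>+b. ennreal (lap_density b (x - q d)) * indicator S x \<partial>B) \<partial>lborel)"
    by (rule P.Fubini'[symmetric]) measurable
  also have "\<dots> = (\<integral>\<^sup>+x. (\<integral>\<^sup>+b. ennreal (lap_density b (x - q d)) \<partial>B) * indicator S x \<partial>lborel)"
    by (intro nn_integral_cong nn_integral_multc) measurable
  finally show ?thesis .
qed

lemma h_formula:
  assumes a: "0 \<le> a" and ac: "a < c" and B_sets: "sets B = sets borel"
    and B_inv_unif: "distr B borel (\<lambda>b. 1 / b) = uniform_measure lborel {a..c}"
  shows "(\<integral>\<^sup>+b. ennreal (lap_density b y) \<partial>B) = ennreal (1/2) * Hf a c \<bar>y\<bar> * inverse (ennreal (c - a))"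
proof -
  note B_sets[measurable_cong]
  have inv[measurable]: "(\<lambda>b::real. 1 / b) \<in> measurable B borel" by measurable
  have "(\<integral>\<^sup>+b. ennreal (lap_density b y) \<partial>B) = (\<integral>\<^sup>+b. ennreal (lap_density (1 / (1 / b)) y) \<partial>B)"
    by simp
  also have "\<dots> = (\<integral>\<^sup>+u. ennreal (lap_density (1 / u) y) \<partial>distr B borel (\<lambda>b. 1 / b))"
    by (rule nn_integral_distr[symmetric]) (auto intro: inv)
  also have "\<dots> = (\<integral>\<^sup>+u. ennreal (lap_density (1 / u) y) \<partial>uniform_measure lborel {a..c})"
    by (simp add: B_inv_unif)
  also have "\<dots> = (\<integral>\<^sup>+u. ennreal (lap_density (1 / u) y) * indicator {a..c} u \<partial>lborel) / emeasure lborel {a..c}"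
    by (rule nn_integral_uniform_measure) auto
  also have "(\<integral>\<^sup>+u. ennreal (lap_density (1 / u) y) * indicator {a..c} u \<partial>lborel) =
      (\<integral>\<^sup>+u. ennreal (1/2) * ennreal (indicator {a..c} u * u * exp (-(u * \<bar>y\<bar>))) \<partial>lborel)"
  proof (intro nn_integral_cong)
    fix u :: real
    show "ennreal (lap_density (1 / u) y) * indicator {a..c} u = ennreal (1/2) * ennreal (indicator {a..c} u * u * exp (-(u * \<bar>y\<bar>)))"
    proof (cases "u \<in> {a..c}")
      case True
      then have u: "0 \<le> u" using a by auto
      have L: "lap_density (1 / u) y = 1/2 * (u * exp (-(u * \<bar>y\<bar>)))"
        using u by (cases "u = 0") (auto simp: lap_density_def field_simps)
      have i: "indicator {a..c} u = (1::real)" "indicator {a..c} u = (1::ennreal)" using True by auto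
      show ?thesis
        unfolding L i mult_1_right mult_1 by (intro ennreal_mult) (use u in auto)
    qed simp
  qed
  also have "\<dots> = ennreal (1/2) * Hf a c \<bar>y\<bar>"
    unfolding Hf_def by (rule nn_integral_cmult) auto
  finally show ?thesis
    using ac by (simp add: divide_ennreal_def)
qed



theorem theoremB4:
  fixes adj :: "'d \<Rightarrow> 'd \<Rightarrow> bool" and q :: "'d \<Rightarrow> real"
    and a c :: real and B :: "real measure"
  assumes bdd: "bdd_above ((\<lambda>p. \<bar>q (fst p) - q (snd p)\<bar>) ` {(d, d'). adj d d'})"
    and sens_pos: "sensitivity adj q > 0"
    and ac: "0 \<le> a" "a < c"
    and B_prob: "prob_space B" and B_sets: "sets B = sets borel"
    and B_inv_unif: "distr B borel (\<lambda>b. 1 / b) = uniform_measure lborel {a..c}"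
  shows "differentially_private adj (R2DP_laplace B q)
           (let \<alpha> = a * sensitivity adj q; \<beta> = c * sensitivity adj q in
            ln ((\<alpha>\<^sup>2 - \<beta>\<^sup>2) /
                (2 * ((1 + \<beta>) * exp (- \<beta>) - (1 + \<alpha>) * exp (- \<alpha>)))))"
proof -
  define D where "D = sensitivity adj q"
  have D: "0 < D" using sens_pos unfolding D_def .
  define N where "N = (1 + a * D) * exp (-(a * D)) - (1 + c * D) * exp (-(c * D))"
  have N: "0 < N"
    using decr[of "a * D" "c * D"] ac D unfolding N_def by (simp add: mult_strict_right_mono)
  define R where "R = ((c\<^sup>2 - a\<^sup>2) / 2) / (N / D\<^sup>2)"
  have c2: "a\<^sup>2 < c\<^sup>2" using ac by (simp add: power_strict_mono)
  have R: "0 < R" unfolding R_def using N D c2 by simp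
  have eps: "exp (let \<alpha> = a * D; \<beta> = c * D in
            ln ((\<alpha>\<^sup>2 - \<beta>\<^sup>2) / (2 * ((1 + \<beta>) * exp (- \<beta>) - (1 + \<alpha>) * exp (- \<alpha>))))) = R"
  proof -
    have "((a * D)\<^sup>2 - (c * D)\<^sup>2) / (2 * ((1 + c * D) * exp (- (c * D)) - (1 + a * D) * exp (- (a * D)))) = R"
    proof -
      have den: "(1 + c * D) * exp (- (c * D)) - (1 + a * D) * exp (- (a * D)) = - N"
        unfolding N_def by simp
      have "((a * D)\<^sup>2 - (c * D)\<^sup>2) / (2 * (- N)) = R"
        unfolding R_def using N D by (simp add: field_simps power_mult_distrib)
      then show ?thesis unfolding den .
    qed
    then show ?thesis using R by (simp add: Let_def)
  qed
  define h where "h y = (\<integral>\<^sup>+b. ennreal (lap_density b y) \<partial>B)" for y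
  have hf: "h y = ennreal (1/2) * Hf a c \<bar>y\<bar> * inverse (ennreal (c - a))" for y
    unfolding h_def using h_formula[OF ac B_sets B_inv_unif] .
  have hle: "h (x - v) \<le> ennreal R * h (x - v')" if "\<bar>v - v'\<bar> \<le> D" for x v v'
  proof -
    have "Hf a c \<bar>x - v\<bar> \<le> ennreal R * Hf a c \<bar>x - v'\<bar>"
      unfolding R_def N_def using ratio[OF ac D, of "\<bar>x - v\<bar>" "\<bar>x - v'\<bar>"] that by simp
    then have "ennreal (1/2) * Hf a c \<bar>x - v\<bar> * inverse (ennreal (c - a)) \<le>
        ennreal (1/2) * (ennreal R * Hf a c \<bar>x - v'\<bar>) * inverse (ennreal (c - a))"
      by (intro mult_right_mono mult_left_mono) auto
    then show ?thesis unfolding hf by (simp add: mult_ac)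
  qed
  show ?thesis
    unfolding differentially_private_def D_def[symmetric] eps
  proof (intro allI impI ballI)
    fix d d' S assume adj: "adj d d'" and S: "S \<in> sets (borel :: real measure)"
    have "\<bar>q (fst (d, d')) - q (snd (d, d'))\<bar> \<le> D"
      unfolding D_def sensitivity_def by (rule cSUP_upper[OF _ bdd]) (use adj in auto)
    then have qd: "\<bar>q d - q d'\<bar> \<le> D" by simp
    have "emeasure (R2DP_laplace B q d) S = (\<integral>\<^sup>+x. h (x - q d) * indicator S x \<partial>lborel)"
      unfolding h_def by (rule bind_formula[OF B_prob B_sets S])
    also have "\<dots> \<le> (\<integral>\<^sup>+x. ennreal R * (h (x - q d') * indicator S x) \<partial>lborel)"
      using hle[OF qd] by (intro nn_integral_mono) (auto simp: mult.assoc[symmetric] intro: mult_right_mono)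
    also have "\<dots> = ennreal R * (\<integral>\<^sup>+x. h (x - q d') * indicator S x \<partial>lborel)"
    proof (rule nn_integral_cmult)
      note B_sets[measurable_cong]
      have [measurable]: "(\<lambda>x. h (x - q d')) \<in> borel_measurable borel"
      proof -
        interpret B: prob_space B by (rule B_prob)
        show ?thesis unfolding h_def by measurable
      qed
      show "(\<lambda>x. h (x - q d') * indicator S x) \<in> borel_measurable lborel" using S by measurable
    qed
    also have "(\<integral>\<^sup>+x. h (x - q d') * indicator S x \<partial>lborel) = emeasure (R2DP_laplace B q d') S"
      unfolding h_def by (rule bind_formula[OF B_prob B_sets S, symmetric])
    finally have le: "emeasure (R2DP_laplace B q d) S \<le> ennreal R * emeasure (R2DP_laplace B q d') S" .
    have "subprob_space (R2DP_laplace B q d')"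
      unfolding R2DP_laplace_def
      by (rule subprob_space_bind[OF prob_space_imp_subprob_space[OF B_prob] kernel_meas[OF B_sets]])
    then have fin: "emeasure (R2DP_laplace B q d') S \<noteq> top"
      by (rule subprob_space.emeasure_subprob_space_less_top)
    have "measure (R2DP_laplace B q d) S = enn2real (emeasure (R2DP_laplace B q d) S)"
      by (simp add: measure_def)
    also have "\<dots> \<le> enn2real (ennreal R * emeasure (R2DP_laplace B q d') S)"
      using le fin by (intro enn2real_mono) (auto simp: ennreal_mult_less_top top.not_eq_extremum)
    also have "\<dots> = R * measure (R2DP_laplace B q d') S"
      using R by (simp add: enn2real_mult measure_def)
    finally show "measure (R2DP_laplace B q d) S \<le> R * measure (R2DP_laplace B q d') S" .
  qed
qed

end
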